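(* Let $\alpha\in(0,1)$, let $X_1,X_2,\dots$ be i.i.d. real random variables with distribution function $F$, and assume $F$ has a unique $\alpha$-quantile $q_\alpha=F^{-1}(\alpha)$. Let $F_k$ be the empirical distribution function of $X_1,\dots,X_k$ and $F_k^{-1}(\alpha):=\inf\{t:F_k(t)\ge\alpha\}$. Put $d(x):=\min\{F(q_\alpha+x)-\alpha,\ \alpha-F(q_\alpha-x)\}$. Then $d(x)>0$ for all $x>0$ and for every $n\in\mathbb N$, $$\mathbb P\Big(\sup_{k\ge n}|F_k^{-1}(\alpha)-q_\alpha|>x\Big)\le 2e^{-2n\,d(x)^2}\qquad\forall x>0.$$
   Context: The $\alpha$-quantiles of $F$ are the points $q$ with $F(q-)\le\alpha\le F(q)$, where $F(q-)$ denotes the left limit of $F$ at $q$. *)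

theory Defs
  imports "HOL-Probability.Probability"
begin

definition left_lim :: "(real \<Rightarrow> real) \<Rightarrow> real \<Rightarrow> real" where
  "left_lim F q = Lim (at_left q) F"

definition is_quantile :: "(real \<Rightarrow> real) \<Rightarrow> real \<Rightarrow> real \<Rightarrow> bool" where
  "is_quantile F \<alpha> q \<longleftrightarrow> left_lim F q \<le> \<alpha> \<and> \<alpha> \<le> F q"

text \<open>Empirical distribution function of the first k observations X 0, ..., X (k-1)
  (the paper's X_1, ..., X_k).\<close>
definition emp_cdf :: "(nat \<Rightarrow> 'a \<Rightarrow> real) \<Rightarrow> nat \<Rightarrow> 'a \<Rightarrow> real \<Rightarrow> real" where
  "emp_cdf X k \<omega> t = real (card {i. i < k \<and> X i \<omega> \<le> t}) / real k"

definition emp_quantile :: "(nat \<Rightarrow> 'a \<Rightarrow> real) \<Rightarrow> nat \<Rightarrow> real \<Rightarrow> 'a \<Rightarrow> real" where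
  "emp_quantile X k \<alpha> \<omega> = Inf {t. emp_cdf X k \<omega> t \<ge> \<alpha>}"

end

theory Submission
  imports Defs
begin


context prob_space
begin

lemma ville_finite:
  fixes Y :: "nat \<Rightarrow> 'a \<Rightarrow> real" and B c :: real and N :: nat
  assumes indep: "indep_vars (\<lambda>_. borel) Y UNIV"
    and nonneg: "\<And>i \<omega>. 0 \<le> Y i \<omega>" and bnd: "\<And>i \<omega>. Y i \<omega> \<le> B"
    and E1: "\<And>i. expectation (Y i) = 1" and c: "c > 0"
  shows "prob {\<omega>\<in>space M. \<exists>k\<le>N. c \<le> (\<Prod>i<k. Y i \<omega>)} \<le> 1 / c"
proof -
  have rv[measurable]: "\<And>i. Y i \<in> borel_measurable M"
    using indep by (auto simp: indep_vars_def)
  define P where "P k \<omega> = (\<Prod>i<k. Y i \<omega>)" for k \<omega>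
  define E where "E k = {\<omega>\<in>space M. c \<le> P k \<omega> \<and> (\<forall>j<k. P j \<omega> < c)}" for k
  define U where "U = {\<omega>\<in>space M. \<exists>k\<le>N. c \<le> P k \<omega>}"
  have B0: "0 \<le> B" using nonneg[of 0] bnd[of 0] by (meson order.trans)
  have Pm[measurable]: "\<And>k. P k \<in> borel_measurable M" unfolding P_def by measurable
  have Em[measurable]: "\<And>k. E k \<in> sets M" unfolding E_def by measurable
  have Um[measurable]: "U \<in> sets M" unfolding U_def by measurable
  have Pnn: "\<And>k \<omega>. 0 \<le> P k \<omega>" unfolding P_def by (simp add: nonneg prod_nonneg)
  have Pb: "\<And>k \<omega>. P k \<omega> \<le> B ^ k"
  proof -
    fix k \<omega>
    have "P k \<omega> \<le> (\<Prod>i<k. B)" unfolding P_def by (intro prod_mono) (simp add: nonneg bnd)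
    then show "P k \<omega> \<le> B ^ k" by simp
  qed
  have Pint: "integrable M (P k)" for k
    by (rule integrable_const_bound[where B="B^k"]) (auto simp: Pnn Pb abs_of_nonneg)
  have Yint: "\<And>i. integrable M (Y i)"
    by (rule integrable_const_bound[where B=B]) (auto simp: nonneg bnd abs_of_nonneg)
  define R where "R k \<omega> = (\<Prod>i\<in>{k..<N}. Y i \<omega>)" for k \<omega>
  have Rm[measurable]: "\<And>k. R k \<in> borel_measurable M" unfolding R_def by measurable
  have ER: "\<And>k. expectation (R k) = 1"
    unfolding R_def
    by (subst indep_vars_lebesgue_integral) (auto simp: E1 Yint intro: indep_vars_subset[OF indep])
  have EPN: "expectation (P N) = 1"
    unfolding P_def
    by (subst indep_vars_lebesgue_integral) (auto simp: E1 Yint intro: indep_vars_subset[OF indep])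
  define G where "G k \<omega> = P k \<omega> * indicator (E k) \<omega>" for k \<omega>
  have Gm[measurable]: "\<And>k. G k \<in> borel_measurable M" unfolding G_def by measurable
  have Gint: "integrable M (G k)" for k
    by (rule integrable_const_bound[where B="B^k"]) (auto simp: G_def Pnn Pb B0 abs_of_nonneg indicator_def)
  have Rint: "\<And>k. integrable M (R k)"
    unfolding R_def by (rule indep_vars_integrable) (auto simp: Yint intro: indep_vars_subset[OF indep])
  have GR: "expectation (G k) = expectation (\<lambda>\<omega>. P N \<omega> * indicator (E k) \<omega>)" if "k \<le> N" for k
  proof -
    define g where "g f = (\<Prod>i<k. f i) * (if c \<le> (\<Prod>i<k. f i) \<and> (\<forall>j<k. (\<Prod>i<j. f i) < c) then 1 else 0)"
      for f :: "nat \<Rightarrow> real"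
    define h where "h f = (\<Prod>i\<in>{k..<N}. f i)" for f :: "nat \<Rightarrow> real"
    have gm: "g \<in> borel_measurable (PiM {..<k} (\<lambda>_. borel))"
      unfolding g_def by measurable
    have hm: "h \<in> borel_measurable (PiM {k..<N} (\<lambda>_. borel))"
      unfolding h_def by measurable
    have "indep_var borel (g \<circ> (\<lambda>\<omega>. restrict (\<lambda>i. Y i \<omega>) {..<k})) borel (h \<circ> (\<lambda>\<omega>. restrict (\<lambda>i. Y i \<omega>) {k..<N}))"
      by (intro indep_var_compose[OF indep_var_restrict[OF indep]] gm hm) auto
    moreover have "h \<circ> (\<lambda>\<omega>. restrict (\<lambda>i. Y i \<omega>) {k..<N}) = R k"
      by (auto simp: h_def R_def fun_eq_iff)
    ultimately have ind: "indep_var borel (g \<circ> (\<lambda>\<omega>. restrict (\<lambda>i. Y i \<omega>) {..<k})) borel (R k)" by simp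
    define Gc where "Gc = g \<circ> (\<lambda>\<omega>. restrict (\<lambda>i. Y i \<omega>) {..<k})"
    have GcG: "\<And>\<omega>. \<omega> \<in> space M \<Longrightarrow> Gc \<omega> = G k \<omega>"
      by (auto simp: Gc_def g_def G_def P_def E_def)
    have Gcint: "integrable M Gc"
      using Gint[of k] GcG Bochner_Integration.integrable_cong[where M=M and N=M and f=Gc and g="G k"] by auto
    have "expectation (\<lambda>\<omega>. Gc \<omega> * R k \<omega>) = expectation Gc * expectation (R k)"
      using ind[folded Gc_def] Gcint Rint by (rule indep_var_lebesgue_integral)
    also have "\<dots> = expectation (G k)"
      using GcG ER Bochner_Integration.integral_cong[where M=M and N=M and f=Gc and g="G k"] by simp
    finally have 1: "expectation (\<lambda>\<omega>. Gc \<omega> * R k \<omega>) = expectation (G k)" .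
    have "P k \<omega> * R k \<omega> = P N \<omega>" for \<omega>
    proof -
      have "{..<N} = {..<k} \<union> {k..<N}" using that by auto
      then show ?thesis unfolding P_def R_def
        by (simp add: prod.union_disjoint[symmetric] ivl_disj_int)
    qed
    then have "expectation (\<lambda>\<omega>. Gc \<omega> * R k \<omega>) = expectation (\<lambda>\<omega>. P N \<omega> * indicator (E k) \<omega>)"
    proof (intro Bochner_Integration.integral_cong refl)
      fix \<omega> assume "\<omega> \<in> space M"
      then have "Gc \<omega> * R k \<omega> = (P k \<omega> * R k \<omega>) * indicator (E k) \<omega>"
        by (simp add: GcG G_def mult_ac)
      then show "Gc \<omega> * R k \<omega> = P N \<omega> * indicator (E k) \<omega>"
        using \<open>\<And>\<omega>. P k \<omega> * R k \<omega> = P N \<omega>\<close> by simp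
    qed
    with 1 show ?thesis by simp
  qed
  have indU: "indicator U \<omega> = (\<Sum>k\<le>N. indicator (E k) \<omega> :: real)" if "\<omega> \<in> space M" for \<omega>
  proof (cases "\<omega> \<in> U")
    case False
    then have "\<And>k. k \<le> N \<Longrightarrow> \<omega> \<notin> E k" using that by (auto simp: U_def E_def)
    then show ?thesis using False by simp
  next
    case True
    then have ex: "\<exists>k. k \<le> N \<and> c \<le> P k \<omega>" by (auto simp: U_def P_def)
    define k0 where "k0 = (LEAST k. k \<le> N \<and> c \<le> P k \<omega>)"
    have k0: "k0 \<le> N" "c \<le> P k0 \<omega>" using LeastI_ex[OF ex] by (auto simp: k0_def)
    have lt: "\<And>j. j < k0 \<Longrightarrow> P j \<omega> < c"
      using not_less_Least[of _ "\<lambda>k. k \<le> N \<and> c \<le> P k \<omega>"] k0 unfolding k0_def[symmetric]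
      by fastforce
    have "\<omega> \<in> E k0" using k0 lt that by (auto simp: E_def)
    have other: "\<omega> \<notin> E k" if "k \<noteq> k0" for k
    proof
      assume "\<omega> \<in> E k"
      then have a: "c \<le> P k \<omega>" "\<And>j. j < k \<Longrightarrow> P j \<omega> < c" by (auto simp: E_def)
      show False
      proof (cases "k < k0")
        case True then show ?thesis using lt a by fastforce
      next
        case False then have "k0 < k" using that by simp
        then show ?thesis using a k0 by fastforce
      qed
    qed
    have "(\<Sum>k\<le>N. indicator (E k) \<omega> :: real) = (\<Sum>k\<le>N. if k = k0 then 1 else 0)"
      using other \<open>\<omega> \<in> E k0\<close> by (intro sum.cong) auto
    also have "\<dots> = 1" using k0 by simp
    finally show ?thesis using True by simp
  qed
  have "c * prob U = expectation (\<lambda>\<omega>. c * indicator U \<omega>)"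
    using Um by simp
  also have "\<dots> = expectation (\<lambda>\<omega>. \<Sum>k\<le>N. c * indicator (E k) \<omega>)"
    by (intro Bochner_Integration.integral_cong refl) (simp add: indU sum_distrib_left)
  also have "\<dots> = (\<Sum>k\<le>N. expectation (\<lambda>\<omega>. c * indicator (E k) \<omega>))"
    by (intro Bochner_Integration.integral_sum) (auto intro!: integrable_real_indicator simp: less_top[symmetric])
  also have "\<dots> \<le> (\<Sum>k\<le>N. expectation (G k))"
  proof (intro sum_mono integral_mono)
    fix k show "integrable M (\<lambda>\<omega>. c * indicator (E k) \<omega>)" by (auto intro!: integrable_real_indicator simp: less_top[symmetric])
    show "integrable M (G k)" by (rule Gint)
    fix \<omega> show "c * indicator (E k) \<omega> \<le> G k \<omega>" by (auto simp: G_def E_def indicator_def)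
  qed
  also have "\<dots> = (\<Sum>k\<le>N. expectation (\<lambda>\<omega>. P N \<omega> * indicator (E k) \<omega>))"
    by (intro sum.cong refl GR) simp
  also have "\<dots> = expectation (\<lambda>\<omega>. \<Sum>k\<le>N. P N \<omega> * indicator (E k) \<omega>)"
    by (intro Bochner_Integration.integral_sum[symmetric]) (auto intro!: integrable_real_mult_indicator Pint)
  also have "\<dots> = expectation (\<lambda>\<omega>. P N \<omega> * indicator U \<omega>)"
    by (intro Bochner_Integration.integral_cong refl) (simp add: indU sum_distrib_left)
  also have "\<dots> \<le> expectation (P N)"
    by (intro integral_mono integrable_real_mult_indicator Pint Um) (auto simp: indicator_def Pnn)
  finally have "c * prob U \<le> 1" using EPN by simp
  then show ?thesis using c unfolding U_def P_def by (simp add: field_simps)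
qed


lemma ville:
  fixes Y :: "nat \<Rightarrow> 'a \<Rightarrow> real" and B c :: real
  assumes indep: "indep_vars (\<lambda>_. borel) Y UNIV"
    and nonneg: "\<And>i \<omega>. 0 \<le> Y i \<omega>" and bnd: "\<And>i \<omega>. Y i \<omega> \<le> B"
    and E1: "\<And>i. expectation (Y i) = 1" and c: "c > 0"
  shows "prob {\<omega>\<in>space M. \<exists>k. c \<le> (\<Prod>i<k. Y i \<omega>)} \<le> 1 / c"
proof -
  have rv[measurable]: "\<And>i. Y i \<in> borel_measurable M"
    using indep by (auto simp: indep_vars_def)
  define A where "A N = {\<omega>\<in>space M. \<exists>k\<le>N. c \<le> (\<Prod>i<k. Y i \<omega>)}" for N
  have "range A \<subseteq> sets M" unfolding A_def by auto
  moreover have "incseq A" unfolding A_def incseq_def by (auto intro: order_trans)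
  ultimately have "(\<lambda>N. prob (A N)) \<longlonglongrightarrow> prob (\<Union>N. A N)"
    by (rule finite_Lim_measure_incseq)
  moreover have "(\<Union>N. A N) = {\<omega>\<in>space M. \<exists>k. c \<le> (\<Prod>i<k. Y i \<omega>)}"
    unfolding A_def by auto
  moreover have "\<And>N. prob (A N) \<le> 1 / c"
    unfolding A_def by (rule ville_finite[OF indep nonneg bnd E1 c])
  ultimately show ?thesis by (metis (no_types) LIMSEQ_le_const2)
qed


lemma hoeffding_lemma_01:
  fixes Z :: "'a \<Rightarrow> real"
  assumes [measurable]: "Z \<in> borel_measurable M" and rng: "\<And>\<omega>. 0 \<le> Z \<omega> \<and> Z \<omega> \<le> 1"
    and l: "l > 0"
  shows "expectation (\<lambda>\<omega>. exp (l * (expectation Z - Z \<omega>))) \<le> exp (l\<^sup>2 / 8)"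
proof -
  interpret ib: interval_bounded_random_variable M "\<lambda>\<omega>. - Z \<omega>" "-1" 0
    by unfold_locales (auto simp: rng)
  have intZ: "integrable M Z"
    by (rule integrable_const_bound[where B=1]) (auto simp: rng abs_le_iff)
  have "(\<integral>\<^sup>+ x. ennreal (exp (l * ((- Z x) - expectation (\<lambda>\<omega>. - Z \<omega>)))) \<partial>M) \<le> ennreal (exp (l\<^sup>2 * (0 - (-1))\<^sup>2 / 8))"
    by (rule ib.Hoeffdings_lemma_nn_integral[OF l])
  moreover have "(\<lambda>x. l * ((- Z x) - expectation (\<lambda>\<omega>. - Z \<omega>))) = (\<lambda>x. l * (expectation Z - Z x))"
    by (auto simp: fun_eq_iff)
  ultimately have 1: "(\<integral>\<^sup>+ x. ennreal (exp (l * (expectation Z - Z x))) \<partial>M) \<le> ennreal (exp (l\<^sup>2 / 8))"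
    by simp
  have int: "integrable M (\<lambda>\<omega>. exp (l * (expectation Z - Z \<omega>)))"
  proof (rule integrable_const_bound[where B="exp (l * \<bar>expectation Z\<bar> + l)"])
    show "AE x in M. norm (exp (l * (expectation Z - Z x))) \<le> exp (l * \<bar>expectation Z\<bar> + l)"
    proof (intro AE_I2)
      fix x
      have "l * (expectation Z - Z x) \<le> l * \<bar>expectation Z\<bar> + l"
      proof -
        have "expectation Z - Z x \<le> \<bar>expectation Z\<bar> + 1" using rng[of x] by linarith
        then have "l * (expectation Z - Z x) \<le> l * (\<bar>expectation Z\<bar> + 1)" using l by (intro mult_left_mono) auto
        then show ?thesis by (simp add: algebra_simps)
      qed
      then show "norm (exp (l * (expectation Z - Z x))) \<le> exp (l * \<bar>expectation Z\<bar> + l)" by simp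
    qed
  qed measurable
  have "ennreal (expectation (\<lambda>\<omega>. exp (l * (expectation Z - Z \<omega>)))) = (\<integral>\<^sup>+ x. ennreal (exp (l * (expectation Z - Z x))) \<partial>M)"
    by (rule nn_integral_eq_integral[symmetric]) (use int in auto)
  with 1 have "ennreal (expectation (\<lambda>\<omega>. exp (l * (expectation Z - Z \<omega>)))) \<le> ennreal (exp (l\<^sup>2 / 8))"
    by simp
  then show ?thesis by (subst (asm) ennreal_le_iff) auto
qed

lemma hoeffding_tail:
  fixes Z :: "nat \<Rightarrow> 'a \<Rightarrow> real" and \<mu> d :: real and n :: nat
  assumes indep: "indep_vars (\<lambda>_. borel) Z UNIV"
    and rng: "\<And>i \<omega>. 0 \<le> Z i \<omega> \<and> Z i \<omega> \<le> 1"
    and EZ: "\<And>i. expectation (Z i) = \<mu>" and d: "d > 0"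
  shows "prob {\<omega>\<in>space M. \<exists>k\<ge>n. (\<Sum>i<k. Z i \<omega>) \<le> real k * (\<mu> - d)} \<le> exp (- 2 * real n * d\<^sup>2)"
proof -
  have rv[measurable]: "\<And>i. Z i \<in> borel_measurable M"
    using indep by (auto simp: indep_vars_def)
  have intZ: "integrable M (Z i)" for i
    by (rule integrable_const_bound[where B=1]) (auto simp: rng abs_le_iff)
  have mu0: "0 \<le> \<mu>"
  proof -
    have "expectation (\<lambda>_. 0::real) \<le> expectation (Z 0)"
      by (intro integral_mono intZ) (auto simp: rng)
    then show ?thesis using EZ[of 0] by simp
  qed
  have mu1: "\<mu> \<le> 1"
  proof -
    have "expectation (Z 0) \<le> expectation (\<lambda>_. 1::real)"
      by (intro integral_mono intZ) (auto simp: rng)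
    then show ?thesis using EZ[of 0] by (simp add: prob_space)
  qed
  define l where "l = 4 * d"
  have l: "l > 0" using d by (simp add: l_def)
  define a where "a i \<omega> = exp (l * (\<mu> - Z i \<omega>))" for i \<omega>
  define m where "m i = expectation (a i)" for i
  have am[measurable]: "a i \<in> borel_measurable M" for i unfolding a_def by measurable
  have alow: "exp (- l) \<le> a i \<omega>" for i \<omega>
  proof -
    have "- 1 \<le> \<mu> - Z i \<omega>" using rng[of i \<omega>] mu0 by linarith
    then have "l * (-1) \<le> l * (\<mu> - Z i \<omega>)" using l by (intro mult_left_mono) auto
    then show ?thesis by (simp add: a_def)
  qed
  have aup: "a i \<omega> \<le> exp l" for i \<omega>
  proof -
    have "\<mu> - Z i \<omega> \<le> 1" using rng[of i \<omega>] mu1 by linarith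
    then have "l * (\<mu> - Z i \<omega>) \<le> l * 1" using l by (intro mult_left_mono) auto
    then show ?thesis by (simp add: a_def)
  qed
  have apos: "0 < a i \<omega>" for i \<omega> by (simp add: a_def)
  have aint: "integrable M (a i)" for i
    by (rule integrable_const_bound[where B="exp l"]) (auto simp: aup apos abs_of_pos)
  have mlow: "exp (- l) \<le> m i" for i
  proof -
    have "expectation (\<lambda>_. exp (- l)) \<le> expectation (a i)"
      by (intro integral_mono aint) (auto simp: alow)
    then show ?thesis by (simp add: m_def prob_space)
  qed
  have mpos: "0 < m i" for i using mlow[of i] by (meson exp_gt_zero less_le_trans)
  have mup: "m i \<le> exp (l\<^sup>2 / 8)" for i
    using hoeffding_lemma_01[OF rv rng l, of i] unfolding m_def a_def EZ by simp
  define Y where "Y i \<omega> = a i \<omega> / m i" for i \<omega>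
  have indY: "indep_vars (\<lambda>_. borel) Y UNIV"
  proof -
    have "indep_vars (\<lambda>_. borel) (\<lambda>i \<omega>. (\<lambda>z. exp (l * (\<mu> - z)) / m i) (Z i \<omega>)) UNIV"
      by (rule indep_vars_compose2[OF indep]) measurable
    moreover have "Y = (\<lambda>i \<omega>. exp (l * (\<mu> - Z i \<omega>)) / m i)" by (auto simp: fun_eq_iff Y_def a_def)
    ultimately show ?thesis by simp
  qed
  have Ynn: "0 \<le> Y i \<omega>" for i \<omega> using mpos[of i] by (simp add: Y_def a_def)
  have Yb: "Y i \<omega> \<le> exp l / exp (- l)" for i \<omega>
    unfolding Y_def using aup[of i \<omega>] mlow[of i] mpos[of i] alow[of i \<omega>]
    by (meson exp_gt_zero frac_le less_le_trans order.strict_implies_order)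
  have EY: "expectation (Y i) = 1" for i
  proof -
    have "Y i = (\<lambda>\<omega>. a i \<omega> / m i)" by (simp add: fun_eq_iff Y_def)
    then show ?thesis using mpos[of i] by (simp add: m_def)
  qed
  define c where "c = exp (2 * real n * d\<^sup>2)"
  have c: "c > 0" by (simp add: c_def)
  have sub: "{\<omega>\<in>space M. \<exists>k\<ge>n. (\<Sum>i<k. Z i \<omega>) \<le> real k * (\<mu> - d)} \<subseteq> {\<omega>\<in>space M. \<exists>k. c \<le> (\<Prod>i<k. Y i \<omega>)}"
  proof safe
    fix \<omega> k assume \<omega>: "\<omega> \<in> space M" and k: "n \<le> k" and S: "(\<Sum>i<k. Z i \<omega>) \<le> real k * (\<mu> - d)"
    have "(\<Prod>i<k. Y i \<omega>) = (\<Prod>i<k. a i \<omega>) / (\<Prod>i<k. m i)"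
      unfolding Y_def by (rule prod_dividef)
    also have "(\<Prod>i<k. a i \<omega>) = exp (\<Sum>i<k. l * (\<mu> - Z i \<omega>))"
      unfolding a_def by (simp add: exp_sum)
    also have "(\<Sum>i<k. l * (\<mu> - Z i \<omega>)) = l * (real k * \<mu> - (\<Sum>i<k. Z i \<omega>))"
      by (simp add: sum_distrib_left[symmetric] sum_subtractf)
    finally have eq: "(\<Prod>i<k. Y i \<omega>) = exp (l * (real k * \<mu> - (\<Sum>i<k. Z i \<omega>))) / (\<Prod>i<k. m i)" .
    have pm: "(\<Prod>i<k. m i) \<le> exp (l\<^sup>2 / 8) ^ k"
    proof -
      have "(\<Prod>i<k. m i) \<le> (\<Prod>i<k. exp (l\<^sup>2 / 8))"
        by (intro prod_mono) (auto simp: mup less_imp_le[OF mpos])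
      then show ?thesis by simp
    qed
    have pmpos: "0 < (\<Prod>i<k. m i)" by (intro prod_pos) (auto simp: mpos)
    have "exp (l * (real k * \<mu> - (\<Sum>i<k. Z i \<omega>))) / exp (l\<^sup>2 / 8) ^ k \<le> (\<Prod>i<k. Y i \<omega>)"
      unfolding eq by (intro divide_left_mono pm) (auto simp: pmpos)
    moreover have "exp (l\<^sup>2 / 8) ^ k = exp (real k * (l\<^sup>2 / 8))"
      by (simp add: exp_of_nat_mult[symmetric])
    moreover have "real k * d \<le> real k * \<mu> - (\<Sum>i<k. Z i \<omega>)" using S by (simp add: algebra_simps)
    then have "l * (real k * d) \<le> l * (real k * \<mu> - (\<Sum>i<k. Z i \<omega>))" using l by (intro mult_left_mono) auto
    then have "2 * real n * d\<^sup>2 \<le> l * (real k * \<mu> - (\<Sum>i<k. Z i \<omega>)) - real k * (l\<^sup>2 / 8)"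
    proof -
      assume h: "l * (real k * d) \<le> l * (real k * \<mu> - (\<Sum>i<k. Z i \<omega>))"
      have "2 * real n * d\<^sup>2 \<le> 2 * real k * d\<^sup>2" using k by (intro mult_right_mono) auto
      also have "2 * real k * d\<^sup>2 = l * (real k * d) - real k * (l\<^sup>2 / 8)"
        by (simp add: l_def power2_eq_square algebra_simps)
      finally show ?thesis using h by linarith
    qed
    ultimately show "\<exists>k. c \<le> (\<Prod>i<k. Y i \<omega>)"
      unfolding c_def by (intro exI[of _ k]) (metis exp_diff exp_le_cancel_iff order.trans)
  qed
  have "prob {\<omega>\<in>space M. \<exists>k\<ge>n. (\<Sum>i<k. Z i \<omega>) \<le> real k * (\<mu> - d)} \<le> prob {\<omega>\<in>space M. \<exists>k. c \<le> (\<Prod>i<k. Y i \<omega>)}"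
  proof (rule finite_measure_mono[OF sub])
    have [measurable]: "Y i \<in> borel_measurable M" for i unfolding Y_def by measurable
    show "{\<omega>\<in>space M. \<exists>k. c \<le> (\<Prod>i<k. Y i \<omega>)} \<in> sets M" by measurable
  qed
  also have "\<dots> \<le> 1 / c" by (rule ville[OF indY Ynn Yb EY c])
  also have "1 / c = exp (- 2 * real n * d\<^sup>2)" by (simp add: c_def exp_minus field_simps)
  finally show ?thesis .
qed
end


lemma emp_q_le:
  assumes k: "k \<ge> 1" and a: "0 < \<alpha>" and h: "\<alpha> \<le> emp_cdf X k \<omega> s"
  shows "emp_quantile X k \<alpha> \<omega> \<le> s"
  unfolding emp_quantile_def
proof (rule cInf_lower)
  show "s \<in> {t. \<alpha> \<le> emp_cdf X k \<omega> t}" using h by simp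
  show "bdd_below {t. \<alpha> \<le> emp_cdf X k \<omega> t}"
  proof (rule bdd_belowI)
    fix t assume "t \<in> {t. \<alpha> \<le> emp_cdf X k \<omega> t}"
    then have "0 < emp_cdf X k \<omega> t" using a by simp
    then have "card {i. i < k \<and> X i \<omega> \<le> t} \<noteq> 0" unfolding emp_cdf_def by (metis div_0 of_nat_0 less_irrefl)
    then have "{i. i < k \<and> X i \<omega> \<le> t} \<noteq> {}" by (metis card.empty)
    then obtain i where "i < k" "X i \<omega> \<le> t" by blast
    moreover have "Min ((\<lambda>i. X i \<omega>) ` {..<k}) \<le> X i \<omega>" using \<open>i < k\<close> by (intro Min_le) auto
    ultimately show "Min ((\<lambda>i. X i \<omega>) ` {..<k}) \<le> t" by linarith
  qed
qed

lemma emp_cdf_mono: "s \<le> t \<Longrightarrow> emp_cdf X k \<omega> s \<le> emp_cdf X k \<omega> t"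
  unfolding emp_cdf_def
  by (intro divide_right_mono of_nat_mono card_mono) auto

lemma emp_q_less:
  assumes k: "k \<ge> 1" and a: "\<alpha> \<le> 1" and h: "emp_quantile X k \<alpha> \<omega> < s"
  shows "\<alpha> \<le> emp_cdf X k \<omega> s"
proof -
  let ?t = "Max ((\<lambda>i. X i \<omega>) ` {..<k})"
  have "{i. i < k \<and> X i \<omega> \<le> ?t} = {..<k}" by (auto intro: Max_ge)
  then have "emp_cdf X k \<omega> ?t = 1" using k by (simp add: emp_cdf_def)
  then have ne: "{t. \<alpha> \<le> emp_cdf X k \<omega> t} \<noteq> {}" using a by (metis (mono_tags) empty_iff mem_Collect_eq)
  obtain t where "t \<in> {t. \<alpha> \<le> emp_cdf X k \<omega> t}" "t < s"
    using cInf_lessD[OF ne] h unfolding emp_quantile_def by blast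
  then show ?thesis using emp_cdf_mono[of t s X k \<omega>] by simp
qed



lemma left_lim_cdf:
  assumes "real_distribution D"
  shows "left_lim (cdf D) q = measure D {..<q}"
proof -
  interpret real_distribution D by fact
  show ?thesis unfolding left_lim_def
    by (intro tendsto_Lim cdf_at_left) (simp add: trivial_limit_at_left_real)
qed

lemma quantile_gap:
  assumes D: "real_distribution D" and F: "F = cdf D" and a: "0 < \<alpha>" "\<alpha> < 1"
    and q: "is_quantile F \<alpha> q" and uq: "\<And>q'. is_quantile F \<alpha> q' \<Longrightarrow> q' = q" and x: "x > 0"
  shows "\<alpha> < F (q + x) \<and> F (q - x) < \<alpha>"
proof
  interpret real_distribution D by fact
  have LL: "left_lim F t = measure D {..<t}" for t unfolding F by (rule left_lim_cdf[OF D])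
  have mono: "s \<le> t \<Longrightarrow> F s \<le> F t" for s t unfolding F by (rule cdf_nondecreasing)
  have Fle: "measure D {..<t} \<le> F t" for t unfolding F cdf_def
    by (intro finite_measure_mono) auto
  show "\<alpha> < F (q + x)"
  proof (rule ccontr)
    assume "\<not> \<alpha> < F (q + x)"
    moreover have "\<alpha> \<le> F q" using q by (simp add: is_quantile_def)
    moreover have "F q \<le> F (q + x)" using x by (intro mono) simp
    ultimately have eq: "F (q + x) = \<alpha>" by simp
    have "is_quantile F \<alpha> (q + x)"
      unfolding is_quantile_def LL using Fle[of "q+x"] eq by simp
    then show False using uq x by force
  qed
  show "F (q - x) < \<alpha>"
  proof (rule ccontr)
    assume "\<not> F (q - x) < \<alpha>"
    then have ge: "\<alpha> \<le> F (q - x)" by simp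
    define S where "S = {t. \<alpha> \<le> F t}"
    have ne: "q - x \<in> S" using ge by (simp add: S_def)
    have "eventually (\<lambda>t. F t < \<alpha>) at_bot"
      using cdf_lim_at_bot a(1) unfolding F by (rule order_tendstoD)
    then obtain L where L: "\<And>t. t \<le> L \<Longrightarrow> F t < \<alpha>" by (auto simp: eventually_at_bot_linorder)
    have bdd: "bdd_below S"
      by (rule bdd_belowI[of _ L]) (metis L S_def mem_Collect_eq not_le order.order_iff_strict)
    define q' where "q' = Inf S"
    have q'le: "q' \<le> q - x" unfolding q'_def by (rule cInf_lower[OF ne bdd])
    have below: "F t < \<alpha>" if "t < q'" for t
    proof (rule ccontr)
      assume "\<not> F t < \<alpha>" then have "t \<in> S" by (simp add: S_def)
      then have "q' \<le> t" unfolding q'_def by (rule cInf_lower[OF _ bdd])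
      with that show False by simp
    qed
    have Fq': "\<alpha> \<le> F q'"
    proof -
      have "(F \<longlongrightarrow> F q') (at_right q')" using cdf_is_right_cont unfolding F continuous_within by simp
      moreover have "eventually (\<lambda>t. \<alpha> \<le> F t) (at_right q')"
      proof (rule eventually_at_rightI[where b="q' + 1"])
        fix t assume t: "t \<in> {q'<..<q'+1}"
        then have "Inf S < t" by (simp add: q'_def)
        then obtain s where "s \<in> S" "s < t" using cInf_lessD[of S t] ne by blast
        then show "\<alpha> \<le> F t" using mono[of s t] by (simp add: S_def)
      qed simp
      ultimately show ?thesis by (intro tendsto_lowerbound) (auto simp: trivial_limit_at_right_real)
    qed
    have "measure D {..<q'} \<le> \<alpha>"
    proof -
      have "(F \<longlongrightarrow> measure D {..<q'}) (at_left q')" unfolding F by (rule cdf_at_left)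
      moreover have "eventually (\<lambda>t. F t \<le> \<alpha>) (at_left q')"
        by (rule eventually_at_leftI[where a="q' - 1"]) (auto intro: less_imp_le below)
      ultimately show ?thesis by (intro tendsto_upperbound) (auto simp: trivial_limit_at_left_real)
    qed
    then have "is_quantile F \<alpha> q'" unfolding is_quantile_def LL using Fq' by simp
    then show False using uq q'le x by force
  qed
qed


lemma sum_ind_card: fixes k :: nat shows "(\<Sum>i<k. if P i then 1 else 0 :: real) = real (card {i. i < k \<and> P i})"
proof -
  have "(\<Sum>i<k. if P i then 1 else 0 :: real) = real (card ({..<k} \<inter> {i. P i}))"
    by (simp add: sum.If_cases)
  also have "{..<k} \<inter> {i. P i} = {i. i < k \<and> P i}" by auto
  finally show ?thesis by simp
qed

theorem mainTheorem9:
  fixes M :: "'a measure" and X :: "nat \<Rightarrow> 'a \<Rightarrow> real"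
    and F :: "real \<Rightarrow> real" and \<alpha> q\<^sub>\<alpha> :: real and n :: nat
  assumes "prob_space M"
    and "\<alpha> \<in> {0<..<1}"
    and "\<And>i. X i \<in> borel_measurable M"
    and "prob_space.indep_vars M (\<lambda>_. borel) X UNIV"
    and "\<And>i t. F t = measure M {\<omega> \<in> space M. X i \<omega> \<le> t}"
    and "is_quantile F \<alpha> q\<^sub>\<alpha>"
    and "\<And>q. is_quantile F \<alpha> q \<Longrightarrow> q = q\<^sub>\<alpha>"
    and "n \<ge> 1"
  defines "d \<equiv> (\<lambda>x. min (F (q\<^sub>\<alpha> + x) - \<alpha>) (\<alpha> - F (q\<^sub>\<alpha> - x)))"
  shows "(\<forall>x>0. d x > 0) \<and>
    (\<forall>x>0. measure M {\<omega> \<in> space M.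
        (SUP k\<in>{n..}. ereal \<bar>emp_quantile X k \<alpha> \<omega> - q\<^sub>\<alpha>\<bar>) > ereal x}
      \<le> 2 * exp (- 2 * real n * (d x)\<^sup>2))"
proof -
  interpret prob_space M by fact
  note rv[measurable] = assms(3)
  have indep: "indep_vars (\<lambda>_. borel) X UNIV" by (rule assms(4))
  have a: "0 < \<alpha>" "\<alpha> < 1" using assms(2) by auto
  define D where "D = distr M borel (X 0)"
  have D: "real_distribution D" unfolding D_def by (rule real_distribution_distr) simp
  have Fc: "F = cdf D"
  proof
    fix t
    have "cdf D t = measure D {..t}" by (simp add: cdf_def)
    also have "\<dots> = measure M (X 0 -` {..t} \<inter> space M)" unfolding D_def
      by (rule measure_distr) auto
    also have "X 0 -` {..t} \<inter> space M = {\<omega> \<in> space M. X 0 \<omega> \<le> t}" by auto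
    finally show "F t = cdf D t" using assms(5)[of t 0] by simp
  qed
  have gap: "\<alpha> < F (q\<^sub>\<alpha> + x) \<and> F (q\<^sub>\<alpha> - x) < \<alpha>" if "x > 0" for x
    by (rule quantile_gap[OF D Fc a assms(6) assms(7) that])
  have part1: "\<forall>x>0. d x > 0" using gap by (simp add: d_def)
  have EW: "expectation (\<lambda>\<omega>. if X i \<omega> \<le> t then 1 else 0 :: real) = F t" for i t
  proof -
    have "expectation (\<lambda>\<omega>. if X i \<omega> \<le> t then 1 else 0 :: real) = expectation (indicator {\<omega> \<in> space M. X i \<omega> \<le> t})"
      by (intro Bochner_Integration.integral_cong) (auto simp: indicator_def)
    also have "\<dots> = measure M {\<omega> \<in> space M. X i \<omega> \<le> t}"
      by (simp add: Int_absorb2)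
    finally show ?thesis using assms(5)[of t i] by simp
  qed
  have indW: "indep_vars (\<lambda>_. borel) (\<lambda>i \<omega>. g (if X i \<omega> \<le> t then 1 else 0 :: real)) UNIV"
    if gm: "g \<in> borel_measurable borel" for t and g :: "real \<Rightarrow> real"
  proof -
    have "indep_vars (\<lambda>_. borel) (\<lambda>i \<omega>. (\<lambda>z. g (if z \<le> t then 1 else 0 :: real)) (X i \<omega>)) UNIV"
      by (rule indep_vars_compose2[OF indep]) (use gm in measurable)
    then show ?thesis by simp
  qed
  have part2: "measure M {\<omega> \<in> space M.
        (SUP k\<in>{n..}. ereal \<bar>emp_quantile X k \<alpha> \<omega> - q\<^sub>\<alpha>\<bar>) > ereal x}
      \<le> 2 * exp (- 2 * real n * (d x)\<^sup>2)" if x: "x > 0" for x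
  proof -
    have dx: "d x > 0" using part1 x by simp
    define Z1 where "Z1 i \<omega> = (if X i \<omega> \<le> q\<^sub>\<alpha> + x then 1 else 0 :: real)" for i \<omega>
    define Z2 where "Z2 i \<omega> = 1 - (if X i \<omega> \<le> q\<^sub>\<alpha> - x then 1 else 0 :: real)" for i \<omega>
    have Z1m[measurable]: "Z1 i \<in> borel_measurable M" for i unfolding Z1_def by measurable
    have Z2m[measurable]: "Z2 i \<in> borel_measurable M" for i unfolding Z2_def by measurable
    have ind1: "indep_vars (\<lambda>_. borel) Z1 UNIV"
    proof -
      have "Z1 = (\<lambda>i \<omega>. id (if X i \<omega> \<le> q\<^sub>\<alpha> + x then 1 else 0 :: real))" by (simp add: fun_eq_iff Z1_def)
      then show ?thesis using indW[of id "q\<^sub>\<alpha> + x"] by simp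
    qed
    have ind2: "indep_vars (\<lambda>_. borel) Z2 UNIV"
    proof -
      have "Z2 = (\<lambda>i \<omega>. (\<lambda>z. 1 - z) (if X i \<omega> \<le> q\<^sub>\<alpha> - x then 1 else 0 :: real))" by (simp add: fun_eq_iff Z2_def)
      then show ?thesis using indW[of "\<lambda>z. 1 - z" "q\<^sub>\<alpha> - x"] by simp
    qed
    have rng1: "0 \<le> Z1 i \<omega> \<and> Z1 i \<omega> \<le> 1" for i \<omega> by (simp add: Z1_def)
    have rng2: "0 \<le> Z2 i \<omega> \<and> Z2 i \<omega> \<le> 1" for i \<omega> by (simp add: Z2_def)
    have E1: "expectation (Z1 i) = F (q\<^sub>\<alpha> + x)" for i
      using EW[of i "q\<^sub>\<alpha> + x"] by (simp add: Z1_def[abs_def])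
    have E2: "expectation (Z2 i) = 1 - F (q\<^sub>\<alpha> - x)" for i
    proof -
      have intW: "integrable M (\<lambda>\<omega>. if X i \<omega> \<le> q\<^sub>\<alpha> - x then 1 else 0 :: real)"
        by (rule integrable_const_bound[where B=1]) auto
      have "expectation (Z2 i) = expectation (\<lambda>_. 1::real) - expectation (\<lambda>\<omega>. if X i \<omega> \<le> q\<^sub>\<alpha> - x then 1 else 0 :: real)"
        unfolding Z2_def[abs_def] by (rule Bochner_Integration.integral_diff) (auto simp: intW)
      then show ?thesis using EW[of i "q\<^sub>\<alpha> - x"] by (simp add: prob_space)
    qed
    define A1 where "A1 = {\<omega>\<in>space M. \<exists>k\<ge>n. (\<Sum>i<k. Z1 i \<omega>) \<le> real k * (F (q\<^sub>\<alpha> + x) - d x)}"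
    define A2 where "A2 = {\<omega>\<in>space M. \<exists>k\<ge>n. (\<Sum>i<k. Z2 i \<omega>) \<le> real k * ((1 - F (q\<^sub>\<alpha> - x)) - d x)}"
    have P1: "prob A1 \<le> exp (- 2 * real n * (d x)\<^sup>2)"
      unfolding A1_def by (rule hoeffding_tail[OF ind1 rng1 E1 dx])
    have P2: "prob A2 \<le> exp (- 2 * real n * (d x)\<^sup>2)"
      unfolding A2_def by (rule hoeffding_tail[OF ind2 rng2 E2 dx])
    have A1m: "A1 \<in> sets M" unfolding A1_def by measurable
    have A2m: "A2 \<in> sets M" unfolding A2_def by measurable
    have d1: "d x \<le> F (q\<^sub>\<alpha> + x) - \<alpha>" and d2: "d x \<le> \<alpha> - F (q\<^sub>\<alpha> - x)" by (auto simp: d_def)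
    have sub: "{\<omega> \<in> space M. (SUP k\<in>{n..}. ereal \<bar>emp_quantile X k \<alpha> \<omega> - q\<^sub>\<alpha>\<bar>) > ereal x} \<subseteq> A1 \<union> A2"
    proof safe
      fix \<omega> assume \<omega>: "\<omega> \<in> space M" and S: "ereal x < (SUP k\<in>{n..}. ereal \<bar>emp_quantile X k \<alpha> \<omega> - q\<^sub>\<alpha>\<bar>)"
        and n2: "\<omega> \<notin> A2"
      from S obtain k where k: "k \<ge> n" and xk: "x < \<bar>emp_quantile X k \<alpha> \<omega> - q\<^sub>\<alpha>\<bar>"
        by (auto simp: less_SUP_iff)
      have k1: "k \<ge> 1" using k assms(8) by simp
      have kpos: "real k > 0" using k1 by simp
      show "\<omega> \<in> A1"
      proof (cases "emp_quantile X k \<alpha> \<omega> > q\<^sub>\<alpha> + x")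
        case True
        then have "\<not> \<alpha> \<le> emp_cdf X k \<omega> (q\<^sub>\<alpha> + x)" using emp_q_le[OF k1 a(1)] by force
        then have "real (card {i. i < k \<and> X i \<omega> \<le> q\<^sub>\<alpha> + x}) < \<alpha> * real k"
          using kpos by (simp add: emp_cdf_def field_simps)
        moreover have "\<alpha> * real k \<le> real k * (F (q\<^sub>\<alpha> + x) - d x)"
        proof -
          have "real k * (\<alpha> + d x) \<le> real k * F (q\<^sub>\<alpha> + x)" by (rule mult_left_mono) (use d1 in auto)
          then show ?thesis by (simp add: algebra_simps)
        qed
        moreover have "(\<Sum>i<k. Z1 i \<omega>) = real (card {i. i < k \<and> X i \<omega> \<le> q\<^sub>\<alpha> + x})"
          unfolding Z1_def by (rule sum_ind_card)
        ultimately show ?thesis using \<omega> k unfolding A1_def by force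
      next
        case False
        then have lt: "emp_quantile X k \<alpha> \<omega> < q\<^sub>\<alpha> - x" using xk by (auto simp: abs_if split: if_splits)
        then have "\<alpha> \<le> emp_cdf X k \<omega> (q\<^sub>\<alpha> - x)" using emp_q_less[OF k1 less_imp_le[OF a(2)] lt] by blast
        then have c2: "\<alpha> * real k \<le> real (card {i. i < k \<and> X i \<omega> \<le> q\<^sub>\<alpha> - x})"
          using kpos by (simp add: emp_cdf_def field_simps)
        have "(\<Sum>i<k. Z2 i \<omega>) = real k - real (card {i. i < k \<and> X i \<omega> \<le> q\<^sub>\<alpha> - x})"
          unfolding Z2_def by (simp add: sum_subtractf sum_ind_card)
        also have "\<dots> \<le> real k * ((1 - F (q\<^sub>\<alpha> - x)) - d x)"
        proof -
          have "real k * (F (q\<^sub>\<alpha> - x) + d x) \<le> real k * \<alpha>" by (rule mult_left_mono) (use d2 in auto)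
          then show ?thesis using c2 by (simp add: algebra_simps)
        qed
        finally have "\<omega> \<in> A2" using \<omega> k unfolding A2_def by force
        then show ?thesis using n2 by simp
      qed
    qed
    have "measure M {\<omega> \<in> space M. (SUP k\<in>{n..}. ereal \<bar>emp_quantile X k \<alpha> \<omega> - q\<^sub>\<alpha>\<bar>) > ereal x} \<le> prob (A1 \<union> A2)"
      by (rule finite_measure_mono[OF sub sets.Un[OF A1m A2m]])
    also have "\<dots> \<le> prob A1 + prob A2" by (rule measure_Un_le[OF A1m A2m])
    also have "\<dots> \<le> 2 * exp (- 2 * real n * (d x)\<^sup>2)" using P1 P2 by linarith
    finally show ?thesis .
  qed
  show ?thesis by (intro conjI part1 allI impI part2)
qed

end
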